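(* Fix a transition matrix $V$ from $\mathcal X$ to $\mathcal Y$ and assume there exists $y\in\mathcal Y$ such that $V_y$ is not a scalar multiple of $u_{\mathcal X}$. Let $\mathcal S_{\mathcal X}$ be the set of column-stochastic $d\times d$ matrices (a convex set with nonempty interior in its affine hull, equipped with the Lebesgue measure of that affine hull) and $\Delta_{\mathcal X}$ the probability simplex with its Lebesgue measure. Then for almost every $(W,P)\in\mathcal S_{\mathcal X}\times\Delta_{\mathcal X}$, $\operatorname{Ker}P^{k_{(W,V)}}[(W,V)]=\{0\}$ and $\mathcal V^{k_{(P,(W,V))}}(P)=\mathcal V_{\mathcal X}$. Also, for almost every $W\in\mathcal S_{\mathcal X}$, $\operatorname{Ker}P^{k_{(W,V)}}[(W,V)]=\{0\}$ and $\mathcal V^{k_{(P_W,(W,V))}}(P_W)=\mathcal V_{\mathcal X}$, where $P_W$ is the stationary distribution of $W$.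
   Context: Let $\mathcal X=\{1,\dots,d\}$, $\mathcal Y=\{1,\dots,d_Y\}$, $\mathcal V_{\mathcal X}=\mathbb R^{\mathcal X}$ (column vectors; distributions regarded as vectors), $u_{\mathcal X}$ the all-ones vector. For a column-stochastic $W$ on $\mathcal X$ and a transition matrix $V$ from $\mathcal X$ to $\mathcal Y$ ($V(y|x')\ge0$, $\sum_yV(y|x')=1$), the independent-type $\mathcal Y$-valued transition matrix $(W,V)$ is the family $W_y:=WD(V_y)$, where $V_y(x')=V(y|x')$ and $D(v)$ is diagonal with diagonal $v$. For $k\ge1$, $P^k[(W,V)]:\mathcal V_{\mathcal X}\to\mathbb R^{\mathcal Y^k}$, $(P^k[(W,V)]v)(y_k,\dots,y_1)=u_{\mathcal X}^TW_{y_k}\cdots W_{y_1}v$; $k_{(W,V)}$ is the least $k_0\ge1$ with $\bigcap_{k\ge1}\operatorname{Ker}P^k[(W,V)]=\operatorname{Ker}P^{k_0}[(W,V)]$; $K:=\operatorname{Ker}P^{k_{(W,V)}}[(W,V)]$. For a distribution $P$ and $k\ge0$, $\mathcal V^k(P)$ is the subspace of $\mathcal V_{\mathcal X}/K$ spanned by the classes of $W_{y_{k'}}\cdots W_{y_1}P$, $0\le k'\le k$, $y_i\in\mathcal Y$, and $k_{(P,(W,V))}$ is the least $k_1\ge1$ with $\bigcup_{k\ge1}\mathcal V^k(P)=\mathcal V^{k_1}(P)$ (when $K=\{0\}$ the quotient is identified with $\mathcal V_{\mathcal X}$). *)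

theory Defs
  imports "HOL-Analysis.Analysis"
begin

text \<open>Alphabet X is a finite type 'x, Y is a finite type 'y.
  Vectors in V_X are real^'x (columns), d x d matrices are real^'x^'x with
  W $ i $ j the (i,j) entry.\<close>

definition column_stochastic :: "real^'x::finite^'x \<Rightarrow> bool" where
  "column_stochastic W \<longleftrightarrow> (\<forall>i j. W $ i $ j \<ge> 0) \<and> (\<forall>j. (\<Sum>i\<in>UNIV. W $ i $ j) = 1)"

definition stochastic_matrices :: "(real^'x::finite^'x) set" where
  "stochastic_matrices = {W. column_stochastic W}"

definition prob_simplex :: "(real^'x::finite) set" where
  "prob_simplex = {P. (\<forall>i. P $ i \<ge> 0) \<and> (\<Sum>i\<in>UNIV. P $ i) = 1}"

text \<open>V y x' = V(y|x').\<close>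
definition transition_matrix :: "('y::finite \<Rightarrow> 'x::finite \<Rightarrow> real) \<Rightarrow> bool" where
  "transition_matrix V \<longleftrightarrow> (\<forall>y x. V y x \<ge> 0) \<and> (\<forall>x. (\<Sum>y\<in>UNIV. V y x) = 1)"

definition diag_mat :: "('x::finite \<Rightarrow> real) \<Rightarrow> real^'x^'x" where
  "diag_mat v = (\<chi> i j. if i = j then v i else 0)"

definition Wy :: "real^'x::finite^'x \<Rightarrow> ('y \<Rightarrow> 'x \<Rightarrow> real) \<Rightarrow> 'y \<Rightarrow> real^'x^'x" where
  "Wy W V y = W ** diag_mat (V y)"

text \<open>act W V [y1,...,yk] v = W_{yk} ... W_{y1} v\<close>
definition act :: "real^'x::finite^'x \<Rightarrow> ('y \<Rightarrow> 'x \<Rightarrow> real) \<Rightarrow> 'y list \<Rightarrow> real^'x \<Rightarrow> real^'x" where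
  "act W V ys v = fold (\<lambda>y w. Wy W V y *v w) ys v"

definition Pk :: "real^'x::finite^'x \<Rightarrow> ('y \<Rightarrow> 'x \<Rightarrow> real) \<Rightarrow> nat \<Rightarrow> real^'x \<Rightarrow> ('y list \<Rightarrow> real)" where
  "Pk W V k v = (\<lambda>ys. if length ys = k then (\<Sum>i\<in>UNIV. act W V ys v $ i) else 0)"

definition kerP :: "real^'x::finite^'x \<Rightarrow> ('y \<Rightarrow> 'x \<Rightarrow> real) \<Rightarrow> nat \<Rightarrow> (real^'x) set" where
  "kerP W V k = {v. Pk W V k v = (\<lambda>_. 0)}"

definition k_WV :: "real^'x::finite^'x \<Rightarrow> ('y \<Rightarrow> 'x \<Rightarrow> real) \<Rightarrow> nat" where
  "k_WV W V = (LEAST k0. k0 \<ge> 1 \<and> (\<Inter>k\<in>{1..}. kerP W V k) = kerP W V k0)"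

definition Kspace :: "real^'x::finite^'x \<Rightarrow> ('y \<Rightarrow> 'x \<Rightarrow> real) \<Rightarrow> (real^'x) set" where
  "Kspace W V = kerP W V (k_WV W V)"

text \<open>V^k(P), a subspace of V_X / K, represented by its preimage in V_X
  (span of the vectors plus K).\<close>
definition Vk :: "real^'x::finite^'x \<Rightarrow> ('y \<Rightarrow> 'x \<Rightarrow> real) \<Rightarrow> real^'x \<Rightarrow> nat \<Rightarrow> (real^'x) set" where
  "Vk W V P k = {a + b | a b. a \<in> span {act W V ys P | ys. length ys \<le> k} \<and> b \<in> Kspace W V}"

definition k_PWV :: "real^'x::finite^'x \<Rightarrow> ('y \<Rightarrow> 'x \<Rightarrow> real) \<Rightarrow> real^'x \<Rightarrow> nat" where
  "k_PWV W V P = (LEAST k1. k1 \<ge> 1 \<and> (\<Union>k\<in>{1..}. Vk W V P k) = Vk W V P k1)"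

definition stationary :: "real^'x::finite^'x \<Rightarrow> real^'x" where
  "stationary W = (THE P. P \<in> prob_simplex \<and> W *v P = P)"

text \<open>Charts for the affine hulls: the entries in row x0 (resp. coordinate x0) are
  determined by the others. The Lebesgue measure of the affine hull is (up to a constant)
  the image of Lebesgue measure on the remaining coordinates, so a set in the affine hull is
  null iff its cylinder preimage under these maps is Lebesgue-null in the full space.\<close>
definition mat_chart :: "'x::finite \<Rightarrow> real^'x^'x \<Rightarrow> real^'x^'x" where
  "mat_chart x0 M = (\<chi> i j. if i = x0 then 1 - (\<Sum>i'\<in>UNIV - {x0}. M $ i' $ j) else M $ i $ j)"

definition vec_chart :: "'x::finite \<Rightarrow> real^'x \<Rightarrow> real^'x" where
  "vec_chart x0 p = (\<chi> i. if i = x0 then 1 - (\<Sum>i'\<in>UNIV - {x0}. p $ i') else p $ i)"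

end

theory Submission
  imports Defs
begin

inductive ppoly :: "'i set \<Rightarrow> (('i \<Rightarrow> real) \<Rightarrow> real) \<Rightarrow> bool" for I where
  pconst: "ppoly I (\<lambda>x. c)"
| pvar: "j \<in> I \<Longrightarrow> ppoly I (\<lambda>x. x j)"
| padd: "ppoly I f \<Longrightarrow> ppoly I g \<Longrightarrow> ppoly I (\<lambda>x. f x + g x)"
| pmult: "ppoly I f \<Longrightarrow> ppoly I g \<Longrightarrow> ppoly I (\<lambda>x. f x * g x)"

lemma ppoly_local: "ppoly I f \<Longrightarrow> (\<And>j. j\<in>I \<Longrightarrow> x j = x' j) \<Longrightarrow> f x = f x'"
  by (induction rule: ppoly.induct) auto

lemma ppoly_sum: "finite A \<Longrightarrow> (\<And>a. a \<in> A \<Longrightarrow> ppoly I (f a)) \<Longrightarrow> ppoly I (\<lambda>x. \<Sum>a\<in>A. f a x)"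
  by (induction A rule: finite_induct) (auto intro: ppoly.intros)

lemma ppoly_prod: "finite A \<Longrightarrow> (\<And>a. a \<in> A \<Longrightarrow> ppoly I (f a)) \<Longrightarrow> ppoly I (\<lambda>x. \<Prod>a\<in>A. f a x)"
  by (induction A rule: finite_induct) (auto intro: ppoly.intros)

lemma ppoly_meas: "ppoly I f \<Longrightarrow> I \<subseteq> J \<Longrightarrow> f \<in> borel_measurable (Pi\<^sub>M J (\<lambda>_. lborel))"
proof (induction rule: ppoly.induct)
  case (pvar j)
  then have "(\<lambda>x. x j) \<in> measurable (Pi\<^sub>M J (\<lambda>_. lborel)) lborel"
    by (intro measurable_component_singleton) auto
  then show ?case by simp
qed auto

lemma ppoly_split:
  assumes "ppoly (insert i I) f" "i \<notin> I"
  shows "\<exists>n c. (\<forall>k. ppoly I (c k)) \<and> (\<forall>k>n. \<forall>x. c k x = 0) \<and> (\<forall>x. f x = (\<Sum>k\<le>n. c k x * x i ^ k))"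
  using assms(1)
proof (induction rule: ppoly.induct)
  case (pconst a)
  show ?case
    by (rule exI[of _ 0], rule exI[of _ "\<lambda>k x. if k = 0 then a else 0"]) (auto intro: ppoly.intros)
next
  case (pvar j)
  show ?case
  proof (cases "j = i")
    case True
    show ?thesis
      by (rule exI[of _ 1], rule exI[of _ "\<lambda>k x. if k = 1 then 1 else 0"]) (auto intro: ppoly.intros simp: True)
  next
    case False
    with pvar have j: "j \<in> I" by auto
    show ?thesis
    proof (rule exI[of _ 0], rule exI[of _ "\<lambda>k x. if k = 0 then x j else 0"], intro conjI allI)
      fix k show "ppoly I (\<lambda>x. if k = 0 then x j else 0)"
        by (cases "k = 0") (auto intro: ppoly.intros j)
    qed auto
  qed
next
  case (padd f g)
  from padd.IH obtain n1 c1 where A: "\<forall>k. ppoly I (c1 k)" "\<forall>k>n1. \<forall>x. c1 k x = 0" "\<forall>x. f x = (\<Sum>k\<le>n1. c1 k x * x i ^ k)" by blast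
  from padd.IH obtain n2 c2 where B: "\<forall>k. ppoly I (c2 k)" "\<forall>k>n2. \<forall>x. c2 k x = 0" "\<forall>x. g x = (\<Sum>k\<le>n2. c2 k x * x i ^ k)" by blast
  have ext: "(\<Sum>k\<le>n. c k x * y ^ k) = (\<Sum>k\<le>N. c k x * y ^ k)" if "\<forall>k>n. \<forall>x. c k x = 0" "n \<le> N" for c n N x and y :: real
  proof -
    have "(\<Sum>k\<le>N. c k x * y ^ k) = (\<Sum>k\<le>n. c k x * y ^ k) + (\<Sum>k\<in>{n<..N}. c k x * y ^ k)"
      using that(2) by (subst sum.union_disjoint[symmetric]) (auto intro!: sum.cong)
    also have "(\<Sum>k\<in>{n<..N}. c k x * y ^ k) = 0" using that(1) by auto
    finally show ?thesis by simp
  qed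
  show ?case
  proof (rule exI[of _ "max n1 n2"], rule exI[of _ "\<lambda>k x. c1 k x + c2 k x"], intro conjI allI impI)
    fix x
    show "f x + g x = (\<Sum>k\<le>max n1 n2. (c1 k x + c2 k x) * x i ^ k)"
      using A(3) B(3) ext[OF A(2), of "max n1 n2"] ext[OF B(2), of "max n1 n2"]
      by (simp add: distrib_right sum.distrib)
  qed (use A B in \<open>auto intro: ppoly.intros\<close>)
next
  case (pmult f g)
  from pmult.IH obtain n1 c1 where A: "\<forall>k. ppoly I (c1 k)" "\<forall>k>n1. \<forall>x. c1 k x = 0" "\<forall>x. f x = (\<Sum>k\<le>n1. c1 k x * x i ^ k)" by blast
  from pmult.IH obtain n2 c2 where B: "\<forall>k. ppoly I (c2 k)" "\<forall>k>n2. \<forall>x. c2 k x = 0" "\<forall>x. g x = (\<Sum>k\<le>n2. c2 k x * x i ^ k)" by blast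
  show ?case
  proof (rule exI[of _ "n1 + n2"], rule exI[of _ "\<lambda>r x. \<Sum>k\<le>r. c1 k x * c2 (r - k) x"], intro conjI allI impI)
    fix k show "ppoly I (\<lambda>x. \<Sum>ka\<le>k. c1 ka x * c2 (k - ka) x)"
      using A(1) B(1) by (intro ppoly_sum) (auto intro: ppoly.intros)
  next
    fix r x assume r: "n1 + n2 < r"
    show "(\<Sum>k\<le>r. c1 k x * c2 (r - k) x) = 0"
    proof (intro sum.neutral ballI)
      fix k assume "k \<in> {..r}"
      show "c1 k x * c2 (r - k) x = 0"
        using A(2) B(2) r by (cases "k > n1") auto
    qed
  next
    fix x
    show "f x * g x = (\<Sum>r\<le>n1 + n2. (\<Sum>k\<le>r. c1 k x * c2 (r - k) x) * x i ^ r)"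
      using A(3) B(3) polynomial_product[of n1 "\<lambda>k. c1 k x" n2 "\<lambda>k. c2 k x" "x i"] A(2) B(2)
      by simp
  qed
qed

lemma ppoly_null:
  assumes "finite I"
  shows "ppoly I f \<Longrightarrow> (\<exists>x. f x \<noteq> 0) \<Longrightarrow>
     {x \<in> space (Pi\<^sub>M I (\<lambda>_. lborel)). f x = 0} \<in> null_sets (Pi\<^sub>M I (\<lambda>_. lborel))"
  using assms
proof (induction I arbitrary: f rule: finite_induct)
  case empty
  then obtain z where z: "f z \<noteq> 0" by auto
  have "f x = f z" for x using ppoly_local[OF empty(1)] by auto
  with z have "{x \<in> space (Pi\<^sub>M {} (\<lambda>_. lborel)). f x = 0} = {}" by (metis (mono_tags, lifting) empty_Collect_eq)
  then show ?case by (metis null_sets.empty_sets)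
next
  case (insert i I)
  interpret product_sigma_finite "\<lambda>_. lborel" by standard
  obtain n c where C: "\<forall>k. ppoly I (c k)" "\<forall>k>n. \<forall>x. c k x = 0"
    "\<forall>x. f x = (\<Sum>k\<le>n. c k x * x i ^ k)"
    using ppoly_split[OF insert(4) insert(2)] by blast
  from insert(5) obtain z where z: "f z \<noteq> 0" by auto
  then obtain k0 where k0: "c k0 z \<noteq> 0" using C(3) by (metis (no_types, lifting) mult_eq_0_iff sum.neutral)
  then have k0n: "k0 \<le> n" using C(2) by (meson not_le)
  have N: "{x \<in> space (Pi\<^sub>M I (\<lambda>_. lborel)). c k0 x = 0} \<in> null_sets (Pi\<^sub>M I (\<lambda>_. lborel))"
    using insert.IH[of "c k0"] C(1) k0 by auto
  have AEI: "AE x in Pi\<^sub>M I (\<lambda>_. lborel). c k0 x \<noteq> 0"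
    using N by (rule AE_I') auto
  let ?Z = "{x \<in> space (Pi\<^sub>M (insert i I) (\<lambda>_. lborel)). f x = 0}"
  have fm: "f \<in> borel_measurable (Pi\<^sub>M (insert i I) (\<lambda>_. lborel))"
    using ppoly_meas[OF insert(4)] by blast
  have Zs: "?Z \<in> sets (Pi\<^sub>M (insert i I) (\<lambda>_. lborel))"
    using fm by measurable
  have AE0: "AE x in Pi\<^sub>M I (\<lambda>_. lborel). (\<integral>\<^sup>+ y. indicator ?Z (x(i := y)) \<partial>lborel) = 0"
      using AEI
    proof eventually_elim
      case (elim x)
      have cloc: "c k (x(i := y)) = c k x" for k y
        by (rule ppoly_local[OF C(1)[rule_format, of k]]) (use insert(2) in auto)
      let ?F = "{y. (\<Sum>k\<le>n. c k x * y ^ k) = 0}"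
      have Ff: "finite ?F"
        using polyfun_roots_finite[of "\<lambda>k. c k x" k0 n] elim k0n by auto
      have "(\<integral>\<^sup>+ y. indicator ?Z (x(i := y)) \<partial>lborel) \<le> (\<integral>\<^sup>+ y. indicator ?F y \<partial>lborel)"
        by (intro nn_integral_mono) (simp add: indicator_def cloc C(3)[rule_format, of "x(i := _)"])
      also have "\<dots> = emeasure lborel ?F"
        using Ff by (intro nn_integral_indicator) (auto intro: finite_imp_null_set_lborel)
      also have "\<dots> = 0"
        using null_setsD1[OF finite_imp_null_set_lborel[OF Ff]] .
      finally show ?case by simp
  qed
  have "emeasure (Pi\<^sub>M (insert i I) (\<lambda>_. lborel)) ?Z
      = (\<integral>\<^sup>+ x. indicator ?Z x \<partial>(Pi\<^sub>M (insert i I) (\<lambda>_. lborel)))"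
    using Zs by simp
  also have "\<dots> = (\<integral>\<^sup>+ x. (\<integral>\<^sup>+ y. indicator ?Z (x(i := y)) \<partial>lborel) \<partial>(Pi\<^sub>M I (\<lambda>_. lborel)))"
    using Zs by (subst product_nn_integral_insert) (auto simp: insert)
  also have "\<dots> = (\<integral>\<^sup>+ x. 0 \<partial>(Pi\<^sub>M I (\<lambda>_. (lborel::real measure))))"
    by (rule nn_integral_cong_AE[OF AE0])
  also have "\<dots> = 0" by simp
  finally show ?case using Zs by (simp add: null_sets_def)
qed

inductive epoly :: "('a::euclidean_space \<Rightarrow> real) \<Rightarrow> bool" where
  econst: "epoly (\<lambda>x. c)"
| elin: "epoly (\<lambda>x. x \<bullet> b)"
| eadd: "epoly f \<Longrightarrow> epoly g \<Longrightarrow> epoly (\<lambda>x. f x + g x)"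
| emult: "epoly f \<Longrightarrow> epoly g \<Longrightarrow> epoly (\<lambda>x. f x * g x)"

lemma epoly_sum: "finite A \<Longrightarrow> (\<And>a. a \<in> A \<Longrightarrow> epoly (f a)) \<Longrightarrow> epoly (\<lambda>x. \<Sum>a\<in>A. f a x)"
  by (induction A rule: finite_induct) (auto intro: epoly.intros)

lemma epoly_prod: "finite A \<Longrightarrow> (\<And>a. a \<in> A \<Longrightarrow> epoly (f a)) \<Longrightarrow> epoly (\<lambda>x. \<Prod>a\<in>A. f a x)"
  by (induction A rule: finite_induct) (auto intro: epoly.intros)

lemma epoly_minus: "epoly f \<Longrightarrow> epoly g \<Longrightarrow> epoly (\<lambda>x. f x - g x)"
proof -
  assume f: "epoly f" and g: "epoly g"
  have "epoly (\<lambda>x. f x + (\<lambda>x. -1) x * g x)"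
    by (rule eadd[OF f emult[OF econst g]])
  then show ?thesis by simp
qed

lemma epoly_borel: "epoly f \<Longrightarrow> f \<in> borel_measurable borel"
  by (induction rule: epoly.induct) auto

lemma epoly_ppoly:
  fixes f :: "'a::euclidean_space \<Rightarrow> real"
  shows "epoly f \<Longrightarrow> ppoly Basis (\<lambda>g. f (\<Sum>b\<in>Basis. g b *\<^sub>R b))"
proof (induction rule: epoly.induct)
  case (elin c)
  have "ppoly Basis (\<lambda>g. \<Sum>b\<in>Basis. g b * (b \<bullet> c))"
    by (intro ppoly_sum) (auto intro: ppoly.intros)
  then show ?case by (simp add: inner_sum_left)
qed (auto intro: ppoly.intros)

lemma epoly_null:
  fixes f :: "'a::euclidean_space \<Rightarrow> real"
  assumes "epoly f" "f z \<noteq> 0"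
  shows "{x. f x = 0} \<in> null_sets lborel"
proof -
  let ?e = "\<lambda>g. \<Sum>b\<in>Basis. g b *\<^sub>R (b::'a)"
  have em: "?e \<in> measurable (Pi\<^sub>M Basis (\<lambda>_. lborel)) borel"
    by measurable
  have pp: "ppoly Basis (\<lambda>g. f (?e g))" using epoly_ppoly[OF assms(1)] .
  have "?e (\<lambda>b. z \<bullet> b) = z" by (simp add: euclidean_representation)
  then have nz: "\<exists>g. f (?e g) \<noteq> 0" using assms(2) by metis
  have "{g \<in> space (Pi\<^sub>M Basis (\<lambda>_. lborel)). f (?e g) = 0} \<in> null_sets (Pi\<^sub>M Basis (\<lambda>_. lborel))"
    using ppoly_null[OF _ pp nz] by simp
  moreover have "?e -` {x. f x = 0} \<inter> space (Pi\<^sub>M Basis (\<lambda>_. lborel)) = {g \<in> space (Pi\<^sub>M Basis (\<lambda>_. lborel)). f (?e g) = 0}"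
    by auto
  moreover have "{x. f x = 0} \<in> sets borel"
    using epoly_borel[OF assms(1)] by measurable
  ultimately have "{x. f x = 0} \<in> null_sets (distr (Pi\<^sub>M Basis (\<lambda>_. lborel)) borel ?e)"
    by (subst null_sets_distr_iff[OF em]) auto
  then show ?thesis by (simp add: lborel_eq[symmetric])
qed

definition mpoly :: "('a::euclidean_space \<Rightarrow> real^'n^'m) \<Rightarrow> bool" where
  "mpoly F \<longleftrightarrow> (\<forall>i j. epoly (\<lambda>z. F z $ i $ j))"

definition vpoly :: "('a::euclidean_space \<Rightarrow> real^'n) \<Rightarrow> bool" where
  "vpoly F \<longleftrightarrow> (\<forall>i. epoly (\<lambda>z. F z $ i))"

lemma mpoly_const: "mpoly (\<lambda>z. A)"
  by (simp add: mpoly_def econst)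

lemma vpoly_const: "vpoly (\<lambda>z. A)"
  by (simp add: vpoly_def econst)

lemma mpoly_mult: "mpoly A \<Longrightarrow> mpoly B \<Longrightarrow> mpoly (\<lambda>z. A z ** B z)"
  unfolding mpoly_def matrix_matrix_mult_def
  by (auto intro!: epoly_sum emult)

lemma vpoly_mult: "mpoly A \<Longrightarrow> vpoly v \<Longrightarrow> vpoly (\<lambda>z. A z *v v z)"
  unfolding mpoly_def vpoly_def matrix_vector_mult_def
  by (auto intro!: epoly_sum emult)

lemma vpoly_scale: "epoly c \<Longrightarrow> vpoly v \<Longrightarrow> vpoly (\<lambda>z. c z *\<^sub>R v z)"
  unfolding vpoly_def by (auto intro!: emult)

lemma epoly_det: "mpoly A \<Longrightarrow> epoly (\<lambda>z. det (A z))"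
  unfolding det_def mpoly_def
  by (intro epoly_sum epoly_prod emult econst) (auto simp: finite_permutations)

definition gram :: "'l set \<Rightarrow> ('l \<Rightarrow> real^'n) \<Rightarrow> real^'n^'n" where
  "gram L r = (\<chi> a b. \<Sum>l\<in>L. r l $ a * r l $ b)"

lemma mpoly_gram: "finite L \<Longrightarrow> (\<And>l. l \<in> L \<Longrightarrow> vpoly (\<lambda>z. r z l)) \<Longrightarrow> mpoly (\<lambda>z. gram L (r z))"
  unfolding mpoly_def vpoly_def gram_def
  by (auto intro!: epoly_sum emult)

lemma gram_mulv: "gram L r *v v = (\<Sum>l\<in>L. (r l \<bullet> v) *\<^sub>R r l)"
  unfolding gram_def matrix_vector_mult_def inner_vec_def
  by (simp add: vec_eq_iff sum_component sum_distrib_left sum_distrib_right mult_ac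
      sum.swap[where A = L])

lemma invertible_iff_ker: "invertible (A::real^'n^'n) \<longleftrightarrow> (\<forall>x. A *v x = 0 \<longrightarrow> x = 0)"
  by (simp add: invertible_left_inverse matrix_left_invertible_ker)

lemma gram_det_imp:
  assumes "det (gram L r) \<noteq> 0" "\<forall>l\<in>L. r l \<bullet> v = 0"
  shows "v = 0"
proof -
  have "gram L r *v v = 0" using assms(2) by (simp add: gram_mulv)
  then show ?thesis using assms(1) by (simp add: invertible_det_nz[symmetric] invertible_iff_ker)
qed

lemma gram_det_nz:
  assumes "finite L" "\<And>v. \<forall>l\<in>L. r l \<bullet> v = 0 \<Longrightarrow> v = (0::real^'n)"
  shows "det (gram L r) \<noteq> 0"
proof -
  have "x = 0" if x: "gram L r *v x = 0" for x
  proof -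
    have "0 = x \<bullet> (gram L r *v x)" using x by simp
    also have "\<dots> = (\<Sum>l\<in>L. (r l \<bullet> x)^2)"
      by (simp add: gram_mulv inner_sum_right power2_eq_square inner_commute)
    finally have "(\<Sum>l\<in>L. (r l \<bullet> x)^2) = 0" by simp
    then have "\<forall>l\<in>L. r l \<bullet> x = 0"
      using assms(1) by (simp add: sum_nonneg_eq_0_iff)
    then show ?thesis using assms(2) by blast
  qed
  then show ?thesis by (simp add: invertible_det_nz[symmetric] invertible_iff_ker)
qed

definition actM :: "real^'x::finite^'x \<Rightarrow> ('y \<Rightarrow> 'x \<Rightarrow> real) \<Rightarrow> 'y list \<Rightarrow> real^'x^'x" where
  "actM W V ys = fold (\<lambda>y A. Wy W V y ** A) ys (mat 1)"

lemma fold_act_gen: "fold (\<lambda>y A. Wy W V y ** A) ys A0 *v v = fold (\<lambda>y w. Wy W V y *v w) ys (A0 *v v)"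
  by (induction ys arbitrary: A0 v) (auto simp: matrix_vector_mul_assoc)

lemma act_eq: "act W V ys v = actM W V ys *v v"
  unfolding act_def actM_def using fold_act_gen[of W V ys "mat 1" v] by simp

definition obsrow :: "real^'x::finite^'x \<Rightarrow> ('y \<Rightarrow> 'x \<Rightarrow> real) \<Rightarrow> 'y list \<Rightarrow> real^'x" where
  "obsrow W V ys = (\<chi> j. \<Sum>i\<in>UNIV. actM W V ys $ i $ j)"

lemma sum_act: "(\<Sum>i\<in>UNIV. act W V ys v $ i) = obsrow W V ys \<bullet> v"
proof -
  let ?A = "actM W V ys"
  have "(\<Sum>i\<in>UNIV. act W V ys v $ i) = (\<Sum>i\<in>UNIV. \<Sum>j\<in>UNIV. ?A $ i $ j * v $ j)"
    by (simp only: act_eq matrix_vector_mult_def vec_lambda_beta)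
  also have "\<dots> = (\<Sum>j\<in>UNIV. \<Sum>i\<in>UNIV. ?A $ i $ j * v $ j)"
    by (rule sum.swap)
  also have "\<dots> = (\<Sum>j\<in>UNIV. (\<Sum>i\<in>UNIV. ?A $ i $ j) * v $ j)"
    by (simp only: sum_distrib_right)
  also have "\<dots> = obsrow W V ys \<bullet> v"
    by (simp only: obsrow_def inner_vec_def vec_lambda_beta inner_real_def)
  finally show ?thesis .
qed

lemma finite_len_eq: "finite {ys::'y::finite list. length ys = k}"
proof -
  have "{ys::'y list. length ys = k} = {xs. set xs \<subseteq> UNIV \<and> length xs = k}" by auto
  moreover have "finite {xs. set xs \<subseteq> (UNIV::'y set) \<and> length xs = k}"
    by (rule finite_lists_length_eq) simp
  ultimately show ?thesis by (simp only:)
qed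

lemma finite_len_le: "finite {ys::'y::finite list. length ys \<le> k}"
proof -
  have "{ys::'y list. length ys \<le> k} = {xs. set xs \<subseteq> UNIV \<and> length xs \<le> k}" by auto
  moreover have "finite {xs. set xs \<subseteq> (UNIV::'y set) \<and> length xs \<le> k}"
    by (rule finite_lists_length_le) simp
  ultimately show ?thesis by (simp only:)
qed

lemma kerP_zero:
  fixes V :: "'y::finite \<Rightarrow> 'x::finite \<Rightarrow> real"
  assumes "det (gram {ys. length ys = k} (obsrow W V)) \<noteq> 0"
  shows "kerP W V k = {0}"
proof -
  have "v = 0" if "v \<in> kerP W V k" for v
  proof (rule gram_det_imp[OF assms], intro ballI)
    fix ys :: "'y list" assume "ys \<in> {ys. length ys = k}"
    with that show "obsrow W V ys \<bullet> v = 0"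
      unfolding kerP_def Pk_def by (auto simp: fun_eq_iff sum_act dest!: spec[of _ ys])
  qed
  moreover have "0 \<in> kerP W V k"
    unfolding kerP_def Pk_def by (auto simp: fun_eq_iff sum_act)
  ultimately show ?thesis by auto
qed

lemma zero_kerP: "0 \<in> kerP W V k"
  unfolding kerP_def Pk_def by (auto simp: fun_eq_iff sum_act)

lemma Kspace_zero:
  assumes "kerP W V k = {0}" "k \<ge> 1"
  shows "Kspace W V = {0}"
proof -
  have I: "(\<Inter>k\<in>{1..}. kerP W V k) = {0}"
    using assms zero_kerP by auto
  have "k_WV W V \<ge> 1 \<and> (\<Inter>k\<in>{1..}. kerP W V k) = kerP W V (k_WV W V)"
    unfolding k_WV_def by (rule LeastI[of _ k]) (use assms I in auto)
  then show ?thesis using I by (simp add: Kspace_def)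
qed

lemma span_from_gram:
  fixes r :: "'l \<Rightarrow> real^'n"
  assumes "det (gram L r) \<noteq> 0"
  shows "span (r ` L) = UNIV"
proof (rule ccontr)
  assume "span (r ` L) \<noteq> UNIV"
  then have d: "dim (r ` L) < DIM(real^'n)"
    using dim_eq_full dim_subset_UNIV by (metis le_neq_implies_less)
  obtain x where x: "x \<noteq> 0" "\<And>y. y \<in> span (r ` L) \<Longrightarrow> orthogonal x y"
    using orthogonal_to_subspace_exists[OF d] by blast
  have "\<forall>l\<in>L. r l \<bullet> x = 0"
  proof
    fix l assume "l \<in> L"
    then have "r l \<in> span (r ` L)" by (intro span_base) auto
    then have "orthogonal x (r l)" by (rule x(2))
    then show "r l \<bullet> x = 0" by (simp add: orthogonal_def inner_commute)
  qed
  then have "x = 0" by (rule gram_det_imp[OF assms])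
  with x(1) show False by simp
qed

lemma Vk_full:
  assumes "span {act W V ys P | ys. length ys \<le> k} = UNIV" "k \<ge> 1"
  shows "Vk W V P (k_PWV W V P) = UNIV"
proof -
  have z: "0 \<in> Kspace W V" by (simp add: Kspace_def zero_kerP)
  have full: "Vk W V P k = UNIV"
    unfolding Vk_def using assms(1) z by force
  have U: "(\<Union>k\<in>{1..}. Vk W V P k) = UNIV"
    using full assms(2) by auto
  have "k_PWV W V P \<ge> 1 \<and> (\<Union>k\<in>{1..}. Vk W V P k) = Vk W V P (k_PWV W V P)"
    unfolding k_PWV_def by (rule LeastI[of _ k]) (use assms U full in auto)
  then show ?thesis using U by simp
qed

lemma reach_gram:
  assumes "det (gram {ys. length ys \<le> k} (\<lambda>ys. act W V ys P)) \<noteq> 0"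
  shows "span {act W V ys P | ys. length ys \<le> k} = UNIV"
proof -
  have "{act W V ys P | ys. length ys \<le> k} = (\<lambda>ys. act W V ys P) ` {ys. length ys \<le> k}" by auto
  then show ?thesis using span_from_gram[OF assms] by simp
qed

definition shiftv :: "('x::finite \<Rightarrow> 'x) \<Rightarrow> real^'x \<Rightarrow> real^'x" where
  "shiftv \<rho> f = (\<chi> i. f $ (\<rho> i))"

lemma algebra_full:
  fixes S :: "(real^'x::finite) set" and w :: "'y::finite \<Rightarrow> 'x \<Rightarrow> real"
  assumes S: "subspace S"
    and u: "(\<chi> i. 1) \<in> S"
    and cl: "\<And>f y. f \<in> S \<Longrightarrow> (\<chi> i. f $ (\<rho> i) * w y i) \<in> S"
    and wsum: "\<And>i. (\<Sum>y\<in>UNIV. w y i) = 1"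
    and N: "(\<rho> ^^ N) = id" "N > 0"
    and sep: "\<And>x x'. x \<noteq> x' \<Longrightarrow> \<exists>k. w ysep ((\<rho> ^^ k) x) \<noteq> w ysep ((\<rho> ^^ k) x')"
  shows "S = UNIV"
proof -
  have T: "(\<chi> i. f $ (\<rho> i)) \<in> S" if "f \<in> S" for f
  proof -
    have "(\<Sum>y\<in>UNIV. (\<chi> i. f $ (\<rho> i) * w y i)) \<in> S"
      using cl that by (intro subspace_sum[OF S]) auto
    moreover have "(\<Sum>y\<in>UNIV. (\<chi> i. f $ (\<rho> i) * w y i)) = (\<chi> i. f $ (\<rho> i))"
      by (simp add: vec_eq_iff sum_component sum_distrib_left[symmetric] wsum)
    ultimately show ?thesis by simp
  qed
  have Tk: "(\<chi> i. f $ ((\<rho> ^^ k) i)) \<in> S" if "f \<in> S" for f k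
  proof (induction k)
    case 0 then show ?case using that by simp
  next
    case (Suc k)
    have "(\<chi> i. (\<chi> i. f $ ((\<rho> ^^ k) i)) $ (\<rho> i)) \<in> S" by (rule T[OF Suc])
    then show ?case by (simp add: funpow_Suc_right del: funpow.simps)
  qed
  have Mw: "(\<chi> i. w ysep i * f $ i) \<in> S" if "f \<in> S" for f
  proof -
    have "(\<chi> i. f $ ((\<rho> ^^ (N - 1)) i)) \<in> S" by (rule Tk[OF that])
    from cl[OF this, of ysep] have "(\<chi> i. f $ ((\<rho> ^^ (N - 1)) (\<rho> i)) * w ysep i) \<in> S" by simp
    moreover have "(\<rho> ^^ (N - 1)) (\<rho> i) = i" for i
    proof -
      have "(\<rho> ^^ (N - 1)) (\<rho> i) = (\<rho> ^^ (Suc (N - 1))) i"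
        by (simp only: funpow_Suc_right comp_def)
      also have "Suc (N - 1) = N" using N(2) by simp
      finally show ?thesis using N(1) by simp
    qed
    ultimately show ?thesis by (simp add: mult.commute)
  qed
  have Mk: "(\<chi> i. w ysep ((\<rho> ^^ k) i) * f $ i) \<in> S" if "f \<in> S" for f k
  proof -
    let ?m = "(N - 1) * k"
    have inv: "(\<rho> ^^ ?m) ((\<rho> ^^ k) i) = i" for i
    proof -
      have "(\<rho> ^^ ?m) ((\<rho> ^^ k) i) = (\<rho> ^^ (?m + k)) i" by (simp add: funpow_add)
      also have "?m + k = N * k" using N(2) by (cases N) auto
      also have "(\<rho> ^^ (N * k)) = id" using N(1) by (metis funpow_mult id_funpow mult.commute)
      finally show ?thesis by simp
    qed
    have "(\<chi> i. f $ ((\<rho> ^^ ?m) i)) \<in> S" by (rule Tk[OF that])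
    then have "(\<chi> i. w ysep i * (\<chi> i. f $ ((\<rho> ^^ ?m) i)) $ i) \<in> S" by (rule Mw)
    then have "(\<chi> i. (\<chi> i. w ysep i * (\<chi> i. f $ ((\<rho> ^^ ?m) i)) $ i) $ ((\<rho> ^^ k) i)) \<in> S" by (rule Tk)
    then show ?thesis by (simp only: vec_lambda_beta inv)
  qed
  have Mc: "(\<chi> i. (w ysep ((\<rho> ^^ k) i) - c) / e * f $ i) \<in> S" if "f \<in> S" for f k c e
  proof -
    have "(1/e) *\<^sub>R ((\<chi> i. w ysep ((\<rho> ^^ k) i) * f $ i) - c *\<^sub>R f) \<in> S"
      using Mk[OF that, of k] that S by (intro subspace_scale subspace_diff) auto
    moreover have "(1/e) *\<^sub>R ((\<chi> i. w ysep ((\<rho> ^^ k) i) * f $ i) - c *\<^sub>R f) = (\<chi> i. (w ysep ((\<rho> ^^ k) i) - c) / e * f $ i)"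
      by (simp add: vec_eq_iff divide_inverse algebra_simps)
    ultimately show ?thesis by simp
  qed
  have delta: "(\<chi> i. if i = x then 1 else 0) \<in> S" for x
  proof -
    define kk where "kk x' = (SOME k. w ysep ((\<rho> ^^ k) x) \<noteq> w ysep ((\<rho> ^^ k) x'))" for x'
    have kk: "w ysep ((\<rho> ^^ kk x') x) \<noteq> w ysep ((\<rho> ^^ kk x') x')" if "x' \<noteq> x" for x'
      unfolding kk_def using sep[of x x'] that by (metis (mono_tags, lifting) someI_ex)
    define fac where "fac x' i = (w ysep ((\<rho> ^^ kk x') i) - w ysep ((\<rho> ^^ kk x') x')) /
        (w ysep ((\<rho> ^^ kk x') x) - w ysep ((\<rho> ^^ kk x') x'))" for x' i
    have P: "(\<chi> i. \<Prod>x'\<in>F. fac x' i) \<in> S" if "finite F" for F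
      using that
    proof (induction F rule: finite_induct)
      case empty then show ?case using u by simp
    next
      case (insert a F)
      from Mc[OF insert(3), of "kk a" "w ysep ((\<rho> ^^ kk a) a)" "w ysep ((\<rho> ^^ kk a) x) - w ysep ((\<rho> ^^ kk a) a)"]
      show ?case using insert(1,2) by (simp add: fac_def)
    qed
    have "(\<chi> i. \<Prod>x'\<in>UNIV - {x}. fac x' i) = (\<chi> i. if i = x then 1 else 0)"
    proof (rule vec_eq_iff[THEN iffD2], intro allI)
      fix i
      show "(\<chi> i. \<Prod>x'\<in>UNIV - {x}. fac x' i) $ i = (\<chi> i. if i = x then 1 else 0) $ i"
      proof (cases "i = x")
        case True
        have "fac x' x = 1" if "x' \<in> UNIV - {x}" for x'
          using kk[of x'] that by (simp add: fac_def)
        then show ?thesis using True by simp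
      next
        case False
        have "fac i i = 0" by (simp add: fac_def)
        then have "(\<Prod>x'\<in>UNIV - {x}. fac x' i) = 0"
          using False by (intro prod_zero) auto
        then show ?thesis using False by simp
      qed
    qed
    then show ?thesis using P[of "UNIV - {x}"] by simp
  qed
  have "v \<in> S" for v :: "real^'x"
  proof -
    have "(\<Sum>x\<in>UNIV. v $ x *\<^sub>R (\<chi> i. if i = x then 1 else 0)) \<in> S"
      using delta S by (intro subspace_sum[OF S] subspace_scale) auto
    moreover have "(\<Sum>x\<in>UNIV. v $ x *\<^sub>R (\<chi> i. if i = x then 1 else (0::real))) = v"
      by (simp add: vec_eq_iff sum_component if_distrib cong: if_cong)
    ultimately show ?thesis by simp
  qed
  then show ?thesis by auto
qed

lemma index_sep:
  fixes d p i j :: nat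
  assumes "0 < p" "p < d" "i < d" "j < d" "i \<noteq> j"
  shows "\<exists>k. ((i + k) mod d < p) \<noteq> ((j + k) mod d < p)"
proof -
  define \<delta> where "\<delta> = (j + d - i) mod d"
  have dpos: "\<delta> > 0" "\<delta> < d"
  proof -
    show "\<delta> < d" unfolding \<delta>_def using assms by (intro mod_less_divisor) linarith
    show "\<delta> > 0"
    proof (cases "j \<ge> i")
      case True
      then have e: "j + d - i = (j - i) + d" by linarith
      have "\<delta> = j - i" unfolding \<delta>_def e mod_add_self2 using assms by (intro mod_less) linarith
      then show ?thesis using True assms by simp
    next
      case False
      then have "\<delta> = j + d - i" unfolding \<delta>_def using assms by simp
      then show ?thesis using False assms by simp
    qed
  qed
  have shift: "(i + (m + d - i)) mod d = m \<and> (j + (m + d - i)) mod d = (m + \<delta>) mod d" if "m < d" for m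
  proof
    have "i + (m + d - i) = m + d" using assms by simp
    then show "(i + (m + d - i)) mod d = m" using that by simp
    have "j + (m + d - i) = m + (j + d - i)" using assms by simp
    then show "(j + (m + d - i)) mod d = (m + \<delta>) mod d"
      unfolding \<delta>_def by (simp add: mod_add_right_eq)
  qed
  show ?thesis
  proof (cases "\<delta> + p \<le> d")
    case True
    have a: "(p - 1 + \<delta>) mod d = p - 1 + \<delta>" using True assms dpos by simp
    have "((i + (p - 1 + d - i)) mod d < p) \<noteq> ((j + (p - 1 + d - i)) mod d < p)"
      using shift[of "p - 1"] assms a dpos by simp
    then show ?thesis by blast
  next
    case False
    have a: "(p + \<delta>) mod d = p + \<delta> - d"
      using False assms dpos le_mod_geq[of d "p + \<delta>"] by simp
    have "((i + (p + d - i)) mod d < p) \<noteq> ((j + (p + d - i)) mod d < p)"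
      using shift[of p] assms a dpos by simp
    then show ?thesis by blast
  qed
qed

lemma cycle_exists:
  fixes v :: "'x::finite \<Rightarrow> real"
  assumes ab: "v a \<noteq> v b"
  obtains \<rho> :: "'x \<Rightarrow> 'x" and d :: nat where "d > 0" "\<rho> ^^ d = id"
    "\<And>x x'. \<exists>k. (\<rho> ^^ k) x = x'"
    "\<And>x x'. x \<noteq> x' \<Longrightarrow> \<exists>k. v ((\<rho> ^^ k) x) \<noteq> v ((\<rho> ^^ k) x')"
proof -
  define A where "A = {x. v x = v a}"
  define B where "B = - A"
  define p where "p = card A"
  define q where "q = card B"
  define d where "d = p + q"
  have fA: "finite A" and fB: "finite B" by simp_all
  from ex_bij_betw_nat_finite[OF fA] obtain e1 where e1: "bij_betw e1 {0..<p} A" unfolding p_def by (elim exE)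
  from ex_bij_betw_nat_finite[OF fB] obtain e2 where e2: "bij_betw e2 {0..<q} B" unfolding q_def by (elim exE)
  have "a \<in> A" "b \<in> B" using ab by (auto simp: A_def B_def)
  then have pq: "p > 0" "q > 0"
    unfolding p_def q_def by (auto simp: card_gt_0_iff)
  define e where "e i = (if i < p then e1 i else e2 (i - p))" for i
  have eA: "e m \<in> A \<longleftrightarrow> m < p" if "m < d" for m
  proof (cases "m < p")
    case True
    then have "e m = e1 m" by (simp add: e_def)
    moreover have "e1 m \<in> A" using e1 True by (auto dest: bij_betw_apply)
    ultimately show ?thesis using True by simp
  next
    case False
    then have "e m = e2 (m - p)" by (simp add: e_def)
    moreover have "m - p \<in> {0..<q}" using False that by (simp add: d_def)
    ultimately have "e m \<in> B" using e2 by (simp add: bij_betw_apply)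
    then show ?thesis using False by (auto simp: B_def)
  qed
  have ebij: "bij_betw e {0..<d} UNIV"
  proof -
    have "bij_betw e ({0..<p} \<union> {p..<d}) (A \<union> B)"
    proof (rule bij_betw_combine)
      show "bij_betw e {0..<p} A" using e1 by (rule bij_betw_cong[THEN iffD1, rotated]) (auto simp: e_def)
      have "bij_betw (\<lambda>i. e2 (i - p)) {p..<d} B"
      proof -
        have "bij_betw (\<lambda>i. i - p) {p..<d} {0..<q}"
          by (rule bij_betwI[where g = "\<lambda>i. i + p"]) (auto simp: d_def)
        then show ?thesis using e2 by (rule bij_betw_trans[unfolded comp_def])
      qed
      then show "bij_betw e {p..<d} B" by (rule bij_betw_cong[THEN iffD1, rotated]) (auto simp: e_def)
      show "A \<inter> B = {}" by (auto simp: B_def)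
    qed
    moreover have "{0..<p} \<union> {p..<d} = {0..<d}" by (auto simp: d_def)
    moreover have "A \<union> B = UNIV" by (auto simp: B_def)
    ultimately show ?thesis by simp
  qed
  define idx where "idx = inv_into {0..<d} e"
  have idx: "idx x < d" "e (idx x) = x" for x
    using ebij unfolding idx_def
    by (auto intro: bij_betw_inv_into_right simp: bij_betw_def inv_into_into[of x e "{0..<d}", simplified])
  have idx2: "idx (e i) = i" if "i < d" for i
    using ebij that unfolding idx_def by (simp add: bij_betw_inv_into_left)
  have dpos: "d > 0" using pq by (simp add: d_def)
  define \<rho> where "\<rho> x = e ((idx x + 1) mod d)" for x
  have pw: "(\<rho> ^^ k) x = e ((idx x + k) mod d)" for k x
  proof (induction k)
    case 0 then show ?case by (simp add: idx)
  next
    case (Suc k)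
    have "(\<rho> ^^ Suc k) x = \<rho> (e ((idx x + k) mod d))"
      using Suc by simp
    also have "\<dots> = e ((idx (e ((idx x + k) mod d)) + 1) mod d)"
      by (simp only: \<rho>_def)
    also have "idx (e ((idx x + k) mod d)) = (idx x + k) mod d"
      using dpos by (simp add: idx2)
    also have "((idx x + k) mod d + 1) mod d = (idx x + k + 1) mod d"
      by (rule mod_add_left_eq)
    also have "idx x + k + 1 = idx x + Suc k" by simp
    finally show ?case .
  qed
  show ?thesis
  proof (rule that[of d \<rho>])
    show "d > 0" by (rule dpos)
    show "\<rho> ^^ d = id"
      by (rule ext) (simp add: pw idx)
    fix x x' :: 'x
    show "\<exists>k. (\<rho> ^^ k) x = x'"
    proof
      have "(idx x + (idx x' + d - idx x)) mod d = idx x'"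
        using idx(1)[of x] idx(1)[of x'] by simp
      then show "(\<rho> ^^ (idx x' + d - idx x)) x = x'" by (simp add: pw idx)
    qed
  next
    fix x x' :: 'x assume "x \<noteq> x'"
    then have "idx x \<noteq> idx x'" using idx(2) by metis
    have "p < d" using pq by (simp add: d_def)
    obtain k where k: "((idx x + k) mod d < p) \<noteq> ((idx x' + k) mod d < p)"
      using index_sep[OF pq(1) \<open>p < d\<close> idx(1) idx(1) \<open>idx x \<noteq> idx x'\<close>] by blast
    have "(e ((idx x + k) mod d) \<in> A) \<noteq> (e ((idx x' + k) mod d) \<in> A)"
      using k eA dpos by simp
    then have "v ((\<rho> ^^ k) x) \<noteq> v ((\<rho> ^^ k) x')"
      by (auto simp: pw A_def)
    then show "\<exists>k. v ((\<rho> ^^ k) x) \<noteq> v ((\<rho> ^^ k) x')" by blast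
  qed
qed

lemma span_closed_linear:
  fixes L :: "real^'n \<Rightarrow> real^'n"
  assumes "linear L" "\<And>r. r \<in> R \<Longrightarrow> L r \<in> span R" "f \<in> span R"
  shows "L f \<in> span R"
proof -
  have "subspace {x. L x \<in> span R}"
    unfolding subspace_def using assms(1)
    by (auto simp: linear_0 linear_add linear_scale intro: span_add span_scale span_zero)
  then have "f \<in> {x. L x \<in> span R}"
    using span_subspace_induct[OF assms(3)] assms(2) by blast
  then show ?thesis by simp
qed

lemma Wy_entry: "Wy W V y $ i $ j = W $ i $ j * V y j"
  unfolding Wy_def diag_mat_def matrix_matrix_mult_def
  by (simp add: if_distrib[of "\<lambda>t. W $ i $ _ * t"] cong: if_cong)

lemma fold_mat_gen: "fold (\<lambda>y A. Wy W V y ** A) ys (A0 ** B) = fold (\<lambda>y A. Wy W V y ** A) ys A0 ** B"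
  by (induction ys arbitrary: A0) (auto simp: matrix_mul_assoc)

lemma actM_Cons: "actM W V (y # ys) = actM W V ys ** Wy W V y"
  unfolding actM_def using fold_mat_gen[of W V ys "mat 1" "Wy W V y"] by simp

lemma actM_snoc: "actM W V (ys @ [y]) = Wy W V y ** actM W V ys"
  unfolding actM_def by simp

lemma act_snoc: "act W V (ys @ [y]) v = Wy W V y *v act W V ys v"
  unfolding act_def by simp

lemma obsrow_Cons: "obsrow W V (y # ys) = (\<chi> j. \<Sum>l\<in>UNIV. obsrow W V ys $ l * Wy W V y $ l $ j)"
proof -
  let ?A = "actM W V ys" and ?B = "Wy W V y"
  have "obsrow W V (y # ys) $ j = (\<Sum>l\<in>UNIV. obsrow W V ys $ l * ?B $ l $ j)" for j
  proof -
    have "obsrow W V (y # ys) $ j = (\<Sum>i\<in>UNIV. \<Sum>l\<in>UNIV. ?A $ i $ l * ?B $ l $ j)"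
      by (simp add: obsrow_def actM_Cons matrix_matrix_mult_def)
    also have "\<dots> = (\<Sum>l\<in>UNIV. \<Sum>i\<in>UNIV. ?A $ i $ l * ?B $ l $ j)" by (rule sum.swap)
    also have "\<dots> = (\<Sum>l\<in>UNIV. obsrow W V ys $ l * ?B $ l $ j)"
      by (simp add: obsrow_def sum_distrib_right)
    finally show ?thesis .
  qed
  then show ?thesis by (simp add: vec_eq_iff)
qed

lemma obsrow_Nil: "obsrow W V [] = (\<chi> j. 1)"
  by (simp add: obsrow_def actM_def mat_def vec_eq_iff)

lemma obsrow_snoc_sum:
  assumes "transition_matrix V" "\<And>j. (\<Sum>i\<in>UNIV. W $ i $ j) = 1"
  shows "obsrow W V ys = (\<Sum>y\<in>UNIV. obsrow W V (ys @ [y]))"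
proof -
  let ?A = "actM W V ys"
  have Vs: "(\<Sum>y\<in>UNIV. V y l) = 1" for l using assms(1) by (simp add: transition_matrix_def)
  have "(\<Sum>y\<in>UNIV. obsrow W V (ys @ [y]) $ j) = obsrow W V ys $ j" for j
  proof -
    have "(\<Sum>y\<in>UNIV. obsrow W V (ys @ [y]) $ j)
        = (\<Sum>y\<in>UNIV. \<Sum>i\<in>UNIV. \<Sum>l\<in>UNIV. W $ i $ l * V y l * ?A $ l $ j)"
      by (simp only: obsrow_def vec_lambda_beta actM_snoc matrix_matrix_mult_def Wy_entry)
    also have "\<dots> = (\<Sum>i\<in>UNIV. \<Sum>y\<in>UNIV. \<Sum>l\<in>UNIV. W $ i $ l * V y l * ?A $ l $ j)"
      by (rule sum.swap)
    also have "\<dots> = (\<Sum>i\<in>UNIV. \<Sum>l\<in>UNIV. \<Sum>y\<in>UNIV. W $ i $ l * V y l * ?A $ l $ j)"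
      by (rule sum.cong[OF refl], rule sum.swap)
    also have "\<dots> = (\<Sum>i\<in>UNIV. \<Sum>l\<in>UNIV. W $ i $ l * ?A $ l $ j)"
      by (simp add: sum_distrib_left[symmetric] sum_distrib_right[symmetric] Vs mult.assoc mult.left_commute[of "V _ _"])
    also have "\<dots> = (\<Sum>l\<in>UNIV. \<Sum>i\<in>UNIV. W $ i $ l * ?A $ l $ j)" by (rule sum.swap)
    also have "\<dots> = obsrow W V ys $ j"
      by (simp add: sum_distrib_right[symmetric] assms(2) obsrow_def)
    finally show ?thesis .
  qed
  then show ?thesis by (simp add: vec_eq_iff sum_component)
qed

definition Wob :: "('x::finite \<Rightarrow> 'x) \<Rightarrow> real^'x^'x" where
  "Wob \<rho> = (\<chi> i j. if i = \<rho> j then 1 else 0)"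

definition Wre :: "('x::finite \<Rightarrow> 'x) \<Rightarrow> real^'x^'x" where
  "Wre \<rho> = (\<chi> i j. if \<rho> i = j then 1 else 0)"

lemma finite_len_span:
  fixes f :: "'y::finite list \<Rightarrow> real^'x::finite"
  assumes "span (range f) = UNIV"
  shows "\<exists>K. span (f ` {ys. length ys \<le> K}) = UNIV"
proof -
  define S where "S K = span (f ` {ys. length ys \<le> K})" for K
  have mono: "S K \<subseteq> S K'" if "K \<le> K'" for K K'
    unfolding S_def using that by (intro span_mono image_mono) auto
  have sub: "subspace (\<Union>K. S K)"
    unfolding subspace_def
  proof (intro conjI ballI allI)
    show "0 \<in> (\<Union>K. S K)" by (auto simp: S_def span_zero)
  next
    fix x y assume "x \<in> (\<Union>K. S K)" "y \<in> (\<Union>K. S K)"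
    then obtain K1 K2 where "x \<in> S K1" "y \<in> S K2" by auto
    then have "x \<in> S (max K1 K2)" "y \<in> S (max K1 K2)" using mono by (meson max.cobounded1 max.cobounded2 subsetD)+
    then have "x + y \<in> S (max K1 K2)" by (simp add: S_def span_add)
    then show "x + y \<in> (\<Union>K. S K)" by blast
  next
    fix c :: real and x assume "x \<in> (\<Union>K. S K)"
    then obtain K where "x \<in> S K" by auto
    then have "c *\<^sub>R x \<in> S K" by (simp add: S_def span_scale)
    then show "c *\<^sub>R x \<in> (\<Union>K. S K)" by blast
  qed
  have "range f \<subseteq> (\<Union>K. S K)"
  proof
    fix x assume "x \<in> range f"
    then obtain ys where "x = f ys" by auto
    then have "x \<in> S (length ys)" unfolding S_def by (intro span_base) auto
    then show "x \<in> (\<Union>K. S K)" by blast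
  qed
  then have U: "(\<Union>K. S K) = UNIV"
    using span_minimal[OF _ sub] assms by blast
  define Kb where "Kb b = (SOME K. b \<in> S K)" for b
  have Kb: "b \<in> S (Kb b)" for b
    unfolding Kb_def using U by (metis (mono_tags) UNIV_I UN_E someI_ex)
  define K where "K = Max (Kb ` Basis)"
  have "Basis \<subseteq> S K"
  proof
    fix b :: "real^'x" assume "b \<in> Basis"
    then have "Kb b \<le> K" unfolding K_def by (intro Max_ge) auto
    then show "b \<in> S K" using mono Kb by blast
  qed
  then have "span Basis \<subseteq> S K" unfolding S_def by (intro span_minimal) auto
  then have "S K = UNIV" by (simp add: span_Basis top.extremum_uniqueI)
  then show ?thesis unfolding S_def by blast
qed

lemma sep_shift:
  fixes \<rho> :: "'x \<Rightarrow> 'x"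
  assumes "\<rho> ^^ d = id" "d > 0"
    and "\<And>x x'. x \<noteq> x' \<Longrightarrow> \<exists>k. v ((\<rho> ^^ k) x) \<noteq> v ((\<rho> ^^ k) x')"
  shows "\<And>x x'. x \<noteq> x' \<Longrightarrow> \<exists>k. v (\<rho> ((\<rho> ^^ k) x)) \<noteq> v (\<rho> ((\<rho> ^^ k) x'))"
proof -
  fix x x' :: 'x assume "x \<noteq> x'"
  then obtain k where k: "v ((\<rho> ^^ k) x) \<noteq> v ((\<rho> ^^ k) x')" using assms(3) by blast
  have e: "\<rho> ((\<rho> ^^ (k + d - 1)) z) = (\<rho> ^^ k) z" for z
  proof -
    have "\<rho> ((\<rho> ^^ (k + d - 1)) z) = (\<rho> ^^ Suc (k + d - 1)) z" by simp
    also have "Suc (k + d - 1) = k + d" using assms(2) by simp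
    also have "(\<rho> ^^ (k + d)) z = (\<rho> ^^ k) ((\<rho> ^^ d) z)" by (simp add: funpow_add)
    finally show ?thesis using assms(1) by simp
  qed
  show "\<exists>k. v (\<rho> ((\<rho> ^^ k) x)) \<noteq> v (\<rho> ((\<rho> ^^ k) x'))"
    using k e by metis
qed

lemma Wob_colsum: "(\<Sum>i\<in>UNIV. Wob \<rho> $ i $ j) = 1"
  by (simp add: Wob_def)

lemma Wre_colsum:
  assumes "bij \<rho>"
  shows "(\<Sum>i\<in>UNIV. Wre \<rho> $ i $ j) = 1"
proof -
  have "{i. \<rho> i = j} = {inv \<rho> j}" using assms
    by (auto simp: bij_inv_eq_iff surj_f_inv_f bij_is_surj)
  then show ?thesis by (simp add: Wre_def sum.If_cases)
qed

lemma obsrow_Wob_Cons: "obsrow (Wob \<rho>) V (y # ys) = (\<chi> j. obsrow (Wob \<rho>) V ys $ (\<rho> j) * V y j)"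
proof -
  have "(\<Sum>l\<in>UNIV. obsrow (Wob \<rho>) V ys $ l * (Wob \<rho> $ l $ j * V y j)) = obsrow (Wob \<rho>) V ys $ (\<rho> j) * V y j" for j
    by (simp add: Wob_def if_distrib[of "\<lambda>t. _ * (t * _)"] cong: if_cong)
  then show ?thesis by (simp add: obsrow_Cons Wy_entry vec_eq_iff)
qed

lemma Wre_mulv: "Wy (Wre \<rho>) V y *v f = (\<chi> i. f $ (\<rho> i) * V y (\<rho> i))"
proof -
  have "(\<Sum>j\<in>UNIV. Wre \<rho> $ i $ j * V y j * f $ j) = f $ (\<rho> i) * V y (\<rho> i)" for i
    by (simp add: Wre_def if_distrib[of "\<lambda>t. t * _ * _"] cong: if_cong)
  then show ?thesis by (simp add: matrix_vector_mult_def Wy_entry vec_eq_iff)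
qed

lemma obs_len_mono:
  assumes "transition_matrix V" "\<And>j. (\<Sum>i\<in>UNIV. W $ i $ j) = 1"
  shows "length ys + n = K \<Longrightarrow> obsrow W V ys \<in> span (obsrow W V ` {ys. length ys = K})"
proof (induction n arbitrary: ys)
  case 0 then show ?case by (intro span_base) auto
next
  case (Suc n)
  have "obsrow W V (ys @ [y]) \<in> span (obsrow W V ` {ys. length ys = K})" for y
    using Suc by (intro Suc.IH) auto
  then have "(\<Sum>y\<in>UNIV. obsrow W V (ys @ [y])) \<in> span (obsrow W V ` {ys. length ys = K})"
    by (intro span_sum) auto
  then show ?case using obsrow_snoc_sum[OF assms, of ys] by simp
qed

lemma obs_witness:
  fixes V :: "'y::finite \<Rightarrow> 'x::finite \<Rightarrow> real" and \<rho> :: "'x \<Rightarrow> 'x"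
  assumes V: "transition_matrix V"
    and d: "\<rho> ^^ d = id" "d > 0"
    and sep: "\<And>x x'. x \<noteq> x' \<Longrightarrow> \<exists>k. V y0 ((\<rho> ^^ k) x) \<noteq> V y0 ((\<rho> ^^ k) x')"
  shows "\<exists>K\<ge>1. \<forall>v. (\<forall>ys\<in>{ys. length ys = K}. obsrow (Wob \<rho>) V ys \<bullet> v = 0) \<longrightarrow> v = 0"
proof -
  let ?R = "range (obsrow (Wob \<rho>) V)"
  have Vs: "(\<Sum>y\<in>UNIV. V y i) = 1" for i using V by (simp add: transition_matrix_def)
  have full: "span ?R = UNIV"
  proof (rule algebra_full[where w = V and \<rho> = \<rho> and N = d and ysep = y0])
    show "subspace (span ?R)" by simp
    show "(\<chi> i. 1) \<in> span ?R" using obsrow_Nil[of "Wob \<rho>" V] by (metis rangeI span_base)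
    fix f y assume f: "f \<in> span ?R"
    let ?L = "\<lambda>f::real^'x. \<chi> i. f $ (\<rho> i) * V y i"
    have lin: "linear ?L"
      by (rule linearI) (simp_all add: vec_eq_iff algebra_simps)
    show "?L f \<in> span ?R"
    proof (rule span_closed_linear[OF lin _ f])
      fix r assume "r \<in> ?R"
      then obtain ys where "r = obsrow (Wob \<rho>) V ys" by auto
      then have "?L r = obsrow (Wob \<rho>) V (y # ys)" by (simp add: obsrow_Wob_Cons)
      then show "?L r \<in> span ?R" by (metis rangeI span_base)
    qed
  qed (use Vs d sep in auto)
  obtain K0 where K0: "span (obsrow (Wob \<rho>) V ` {ys. length ys \<le> K0}) = UNIV"
    using finite_len_span[OF full] by blast
  let ?K = "K0 + 1"
  have "obsrow (Wob \<rho>) V ` {ys. length ys \<le> K0} \<subseteq> span (obsrow (Wob \<rho>) V ` {ys. length ys = ?K})"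
  proof
    fix r assume "r \<in> obsrow (Wob \<rho>) V ` {ys. length ys \<le> K0}"
    then obtain ys where ys: "r = obsrow (Wob \<rho>) V ys" "length ys \<le> K0" by auto
    have "length ys + (?K - length ys) = ?K" using ys(2) by simp
    from obs_len_mono[OF V Wob_colsum this] ys(1) show "r \<in> span (obsrow (Wob \<rho>) V ` {ys. length ys = ?K})" by simp
  qed
  then have fullK: "span (obsrow (Wob \<rho>) V ` {ys. length ys = ?K}) = UNIV"
    using K0 span_minimal[of _ "span (obsrow (Wob \<rho>) V ` {ys. length ys = ?K})"]
    by (metis subspace_span top.extremum_uniqueI)
  have "v = 0" if "\<forall>ys\<in>{ys. length ys = ?K}. obsrow (Wob \<rho>) V ys \<bullet> v = 0" for v
  proof -
    have "orthogonal v v"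
    proof (rule orthogonal_to_span)
      show "v \<in> span (obsrow (Wob \<rho>) V ` {ys. length ys = ?K})" using fullK by simp
      fix y assume "y \<in> obsrow (Wob \<rho>) V ` {ys. length ys = ?K}"
      then show "orthogonal v y" using that by (auto simp: orthogonal_def inner_commute)
    qed
    then show ?thesis by (simp add: orthogonal_def)
  qed
  then show ?thesis by (intro exI[of _ ?K]) auto
qed

lemma reach_witness:
  fixes V :: "'y::finite \<Rightarrow> 'x::finite \<Rightarrow> real" and \<rho> :: "'x \<Rightarrow> 'x"
  assumes V: "transition_matrix V"
    and d: "\<rho> ^^ d = id" "d > 0"
    and sep: "\<And>x x'. x \<noteq> x' \<Longrightarrow> \<exists>k. V y0 ((\<rho> ^^ k) x) \<noteq> V y0 ((\<rho> ^^ k) x')"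
  shows "\<exists>K\<ge>1. \<forall>v. (\<forall>ys\<in>{ys. length ys \<le> K}. act (Wre \<rho>) V ys (\<chi> i. 1) \<bullet> v = 0) \<longrightarrow> v = 0"
proof -
  let ?a = "\<lambda>ys. act (Wre \<rho>) V ys (\<chi> i. 1)"
  let ?R = "range ?a"
  have Vs: "(\<Sum>y\<in>UNIV. V y (\<rho> i)) = 1" for i using V by (simp add: transition_matrix_def)
  have sep': "\<And>x x'. x \<noteq> x' \<Longrightarrow> \<exists>k. V y0 (\<rho> ((\<rho> ^^ k) x)) \<noteq> V y0 (\<rho> ((\<rho> ^^ k) x'))"
    by (rule sep_shift[OF d sep])
  have full: "span ?R = UNIV"
  proof (rule algebra_full[where w = "\<lambda>y i. V y (\<rho> i)" and \<rho> = \<rho> and N = d and ysep = y0])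
    show "subspace (span ?R)" by simp
    have "?a [] = (\<chi> i. 1)" by (simp add: act_def)
    then show "(\<chi> i. 1) \<in> span ?R" by (metis rangeI span_base)
    fix f y assume f: "f \<in> span ?R"
    let ?L = "\<lambda>f::real^'x. \<chi> i. f $ (\<rho> i) * V y (\<rho> i)"
    have lin: "linear ?L"
      by (rule linearI) (simp_all add: vec_eq_iff algebra_simps)
    show "?L f \<in> span ?R"
    proof (rule span_closed_linear[OF lin _ f])
      fix r assume "r \<in> ?R"
      then obtain ys where "r = ?a ys" by auto
      then have "?L r = ?a (ys @ [y])" by (simp add: act_snoc Wre_mulv)
      then show "?L r \<in> span ?R" by (metis rangeI span_base)
    qed
  qed (use Vs d sep' in auto)
  obtain K0 where K0: "span (?a ` {ys. length ys \<le> K0}) = UNIV"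
    using finite_len_span[OF full] by blast
  let ?K = "K0 + 1"
  have "span (?a ` {ys. length ys \<le> K0}) \<subseteq> span (?a ` {ys. length ys \<le> ?K})"
    by (intro span_mono image_mono) auto
  then have fullK: "span (?a ` {ys. length ys \<le> ?K}) = UNIV" using K0 by auto
  have "v = 0" if "\<forall>ys\<in>{ys. length ys \<le> ?K}. ?a ys \<bullet> v = 0" for v
  proof -
    have "orthogonal v v"
    proof (rule orthogonal_to_span)
      show "v \<in> span (?a ` {ys. length ys \<le> ?K})" using fullK by simp
      fix y assume "y \<in> ?a ` {ys. length ys \<le> ?K}"
      then show "orthogonal v y" using that by (auto simp: orthogonal_def inner_commute)
    qed
    then show ?thesis by (simp add: orthogonal_def)
  qed
  then show ?thesis by (intro exI[of _ ?K]) auto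
qed

definition Mmat :: "'x::finite \<Rightarrow> real^'x^'x \<Rightarrow> real^'x^'x" where
  "Mmat x0 W = (\<chi> i j. if i = x0 then 1 else (if i = j then 1 else 0) - W $ i $ j)"

definition qvec :: "'x::finite \<Rightarrow> real^'x^'x \<Rightarrow> real^'x" where
  "qvec x0 W = (\<chi> k. det (\<chi> i j. if j = k then axis x0 1 $ i else Mmat x0 W $ i $ j))"

lemma dsum: "(\<Sum>j\<in>UNIV. (if i = j then 1 else 0) * f j) = (f (i::'x::finite)::real)"
proof -
  have "(\<Sum>j\<in>UNIV. (if i = j then 1 else 0) * f j) = (\<Sum>j\<in>UNIV. if i = j then f j else 0)"
    by (rule sum.cong) auto
  then show ?thesis by (simp add: sum.delta')
qed

lemma Mmat_solve:
  assumes "(\<Sum>i\<in>UNIV. P $ i) = 1" "W *v P = P"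
  shows "Mmat x0 W *v P = axis x0 1"
proof -
  have "(Mmat x0 W *v P) $ i = axis x0 1 $ i" for i
  proof (cases "i = x0")
    case True
    then show ?thesis using assms(1) by (simp add: Mmat_def matrix_vector_mult_def axis_def)
  next
    case False
    have "(Mmat x0 W *v P) $ i = (\<Sum>j\<in>UNIV. (if i = j then 1 else 0) * P $ j - W $ i $ j * P $ j)"
      using False by (simp add: Mmat_def matrix_vector_mult_def algebra_simps)
    also have "\<dots> = P $ i - (W *v P) $ i"
      by (simp add: sum_subtractf matrix_vector_mult_def dsum)
    also have "\<dots> = 0" using assms(2) by simp
    finally show ?thesis using False by (simp add: axis_def)
  qed
  then show ?thesis by (simp add: vec_eq_iff)
qed

lemma prob_simplex_props:
  "compact (prob_simplex :: (real^'x::finite) set)" "convex (prob_simplex :: (real^'x) set)"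
  "(prob_simplex :: (real^'x) set) \<noteq> {}"
proof -
  have cl: "closed (prob_simplex :: (real^'x) set)"
  proof -
    have "prob_simplex = (\<Inter>i. {P::real^'x. P $ i \<ge> 0}) \<inter> {P. (\<Sum>i\<in>UNIV. P $ i) = 1}"
      by (auto simp: prob_simplex_def)
    moreover have "closed {P::real^'x. (\<Sum>i\<in>UNIV. P $ i) = 1}"
      by (intro closed_Collect_eq continuous_intros)
    moreover have "closed {P::real^'x. P $ i \<ge> 0}" for i
      by (intro closed_Collect_le continuous_intros)
    ultimately show ?thesis by (metis closed_Int closed_INT)
  qed
  have "prob_simplex \<subseteq> cball (0::real^'x) (real CARD('x))"
  proof
    fix P :: "real^'x" assume P: "P \<in> prob_simplex"
    have "norm P \<le> (\<Sum>i\<in>UNIV. \<bar>P $ i\<bar>)" by (rule norm_le_l1_cart)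
    also have "\<dots> = (\<Sum>i\<in>UNIV. P $ i)" using P by (simp add: prob_simplex_def)
    also have "\<dots> \<le> real CARD('x)" using P by (simp add: prob_simplex_def)
    finally show "P \<in> cball 0 (real CARD('x))" by simp
  qed
  then have "bounded (prob_simplex :: (real^'x) set)" using bounded_cball bounded_subset by blast
  with cl show "compact (prob_simplex :: (real^'x) set)" by (simp add: compact_eq_bounded_closed)
  show "convex (prob_simplex :: (real^'x) set)"
    unfolding convex_def prob_simplex_def
    by (auto simp: sum.distrib sum_distrib_left[symmetric] intro!: add_nonneg_nonneg mult_nonneg_nonneg)
  have "axis (undefined::'x) 1 \<in> prob_simplex"
    by (simp add: prob_simplex_def axis_def)
  then show "(prob_simplex :: (real^'x) set) \<noteq> {}" by blast
qed

lemma stationary_exists: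
  assumes "column_stochastic (W::real^'x::finite^'x)"
  shows "\<exists>P\<in>prob_simplex. W *v P = P"
proof -
  have "W *v P \<in> prob_simplex" if "P \<in> prob_simplex" for P
  proof -
    have "(W *v P) $ i \<ge> 0" for i
      using assms that unfolding column_stochastic_def prob_simplex_def matrix_vector_mult_def
      by (auto intro!: sum_nonneg)
    moreover have "(\<Sum>i\<in>UNIV. (W *v P) $ i) = 1"
    proof -
      have "(\<Sum>i\<in>UNIV. (W *v P) $ i) = (\<Sum>i\<in>UNIV. \<Sum>j\<in>UNIV. W $ i $ j * P $ j)"
        by (simp add: matrix_vector_mult_def)
      also have "\<dots> = (\<Sum>j\<in>UNIV. \<Sum>i\<in>UNIV. W $ i $ j * P $ j)" by (rule sum.swap)
      also have "\<dots> = (\<Sum>j\<in>UNIV. P $ j)"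
        using assms by (simp add: sum_distrib_right[symmetric] column_stochastic_def)
      also have "\<dots> = 1" using that by (simp add: prob_simplex_def)
      finally show ?thesis .
    qed
    ultimately show ?thesis by (simp add: prob_simplex_def)
  qed
  then obtain P where "P \<in> prob_simplex" "W *v P = P"
    using brouwer[OF prob_simplex_props, of "(*v) W"]
    by (metis Pi_I matrix_vector_mult_linear_continuous_on)
  then show ?thesis by blast
qed

lemma stationary_eq:
  assumes "column_stochastic (W::real^'x::finite^'x)" "det (Mmat x0 W) \<noteq> 0"
  shows "stationary W = (1 / det (Mmat x0 W)) *\<^sub>R qvec x0 W"
proof -
  obtain P where P: "P \<in> prob_simplex" "W *v P = P" using stationary_exists[OF assms(1)] by blast
  have sol: "Q = (1 / det (Mmat x0 W)) *\<^sub>R qvec x0 W" if "Q \<in> prob_simplex" "W *v Q = Q" for Q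
  proof -
    have "Mmat x0 W *v Q = axis x0 1"
      using that by (intro Mmat_solve) (auto simp: prob_simplex_def)
    then have "Q = (\<chi> k. det (\<chi> i j. if j = k then axis x0 1 $ i else Mmat x0 W $ i $ j) / det (Mmat x0 W))"
      using cramer[OF assms(2)] by blast
    then show ?thesis by (simp add: qvec_def vec_eq_iff)
  qed
  have "stationary W = P"
    unfolding stationary_def
  proof (rule the1_equality)
    show "\<exists>!P. P \<in> prob_simplex \<and> W *v P = P" using P sol by blast
  qed (use P in auto)
  then show ?thesis using sol[OF P] by simp
qed

lemma Wre_mulv0: "Wre \<rho> *v x = (\<chi> i. x $ (\<rho> i))"
proof -
  have "(\<Sum>j\<in>UNIV. Wre \<rho> $ i $ j * x $ j) = x $ (\<rho> i)" for i
  proof -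
    have "(\<Sum>j\<in>UNIV. Wre \<rho> $ i $ j * x $ j) = (\<Sum>j\<in>UNIV. if \<rho> i = j then x $ j else 0)"
      by (rule sum.cong) (auto simp: Wre_def)
    then show ?thesis by (simp add: sum.delta')
  qed
  then show ?thesis by (simp add: matrix_vector_mult_def vec_eq_iff)
qed

lemma act_scale: "act W V ys (c *\<^sub>R v) = c *\<^sub>R act W V ys v"
  by (simp add: act_eq matrix_vector_mult_scaleR)

lemma stat_witness:
  fixes \<rho> :: "'x::finite \<Rightarrow> 'x"
  assumes bij: "bij \<rho>" and tr: "\<And>x x'. \<exists>k. (\<rho> ^^ k) x = x'"
  shows "det (Mmat x0 (Wre \<rho>)) \<noteq> 0"
    "qvec x0 (Wre \<rho>) = (det (Mmat x0 (Wre \<rho>)) / real CARD('x)) *\<^sub>R (\<chi> i. 1)"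
proof -
  let ?M = "Mmat x0 (Wre \<rho>)"
  have row: "(?M *v x) $ i = x $ i - x $ (\<rho> i)" if "i \<noteq> x0" for x i
  proof -
    have "(?M *v x) $ i = (\<Sum>j\<in>UNIV. (if i = j then 1 else 0) * x $ j - Wre \<rho> $ i $ j * x $ j)"
      using that by (simp add: Mmat_def matrix_vector_mult_def algebra_simps)
    also have "\<dots> = x $ i - (Wre \<rho> *v x) $ i"
      by (simp add: sum_subtractf matrix_vector_mult_def dsum)
    finally show ?thesis by (simp add: Wre_mulv0)
  qed
  have row0: "(?M *v x) $ x0 = (\<Sum>j\<in>UNIV. x $ j)" for x
    by (simp add: Mmat_def matrix_vector_mult_def)
  have ker: "x = 0" if x: "?M *v x = 0" for x
  proof -
    have a: "x $ (\<rho> i) = x $ i" if "i \<noteq> x0" for i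
      using row[OF that, of x] x by simp
    have "(\<Sum>i\<in>UNIV. x $ (\<rho> i)) = (\<Sum>i\<in>UNIV. x $ i)"
      using sum.reindex[of \<rho> UNIV "\<lambda>i. x $ i"] bij by (simp add: bij_def comp_def)
    then have "(\<Sum>i\<in>UNIV. x $ i - x $ (\<rho> i)) = 0" by (simp add: sum_subtractf)
    moreover have "(\<Sum>i\<in>UNIV. x $ i - x $ (\<rho> i)) = (x $ x0 - x $ (\<rho> x0)) + (\<Sum>i\<in>UNIV - {x0}. x $ i - x $ (\<rho> i))"
      by (simp add: sum.remove)
    moreover have "(\<Sum>i\<in>UNIV - {x0}. x $ i - x $ (\<rho> i)) = 0"
      using a by (intro sum.neutral) auto
    ultimately have "x $ (\<rho> x0) = x $ x0" by simp
    with a have all: "x $ (\<rho> i) = x $ i" for i by (cases "i = x0") auto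
    have pk: "x $ ((\<rho> ^^ k) i) = x $ i" for k i
      by (induction k) (auto simp: all)
    have const: "x $ i = x $ x0" for i
      using tr[of x0 i] pk by metis
    have "(\<Sum>j\<in>UNIV. x $ j) = 0" using row0[of x] x by simp
    moreover have "(\<Sum>j\<in>UNIV. x $ j) = (\<Sum>j\<in>(UNIV::'x set). x $ x0)" by (rule sum.cong[OF refl], rule const)
    ultimately have "real CARD('x) * x $ x0 = 0" by simp
    then have "x $ x0 = 0" by simp
    then show ?thesis using const by (simp add: vec_eq_iff)
  qed
  then show dM: "det ?M \<noteq> 0"
    by (simp add: invertible_det_nz[symmetric] invertible_iff_ker)
  let ?x = "(1 / real CARD('x)) *\<^sub>R (\<chi> i. (1::real)) :: real^'x"
  have "Wre \<rho> *v ?x = ?x" by (simp add: Wre_mulv0 vec_eq_iff)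
  moreover have "(\<Sum>i\<in>UNIV. ?x $ i) = 1" by simp
  ultimately have "?M *v ?x = axis x0 1" by (intro Mmat_solve)
  then have "?x = (\<chi> k. det (\<chi> i j. if j = k then axis x0 1 $ i else ?M $ i $ j) / det ?M)"
    using cramer[OF dM] by blast
  then have "?x = (1 / det ?M) *\<^sub>R qvec x0 (Wre \<rho>)"
    by (simp add: qvec_def vec_eq_iff)
  then show "qvec x0 (Wre \<rho>) = (det ?M / real CARD('x)) *\<^sub>R (\<chi> i. 1)"
    using dM by (simp add: vec_eq_iff field_simps)
qed

lemma epoly_fst_entry: "epoly (\<lambda>z::(real^'x::finite^'x) \<times> (real^'x). fst z $ i $ j)"
proof -
  have "(\<lambda>z::(real^'x^'x) \<times> (real^'x). z \<bullet> (axis i (axis j 1), 0)) = (\<lambda>z. fst z $ i $ j)"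
    by (simp add: fun_eq_iff inner_Pair_0 inner_axis)
  then show ?thesis using elin by metis
qed

lemma epoly_snd_entry: "epoly (\<lambda>z::(real^'x::finite^'x) \<times> (real^'x). snd z $ i)"
proof -
  have "(\<lambda>z::(real^'x^'x) \<times> (real^'x). z \<bullet> (0, axis i 1)) = (\<lambda>z. snd z $ i)"
    by (simp add: fun_eq_iff inner_Pair_0 inner_axis)
  then show ?thesis using elin by metis
qed

lemma epoly_id_entry: "epoly (\<lambda>M::real^'x::finite^'x. M $ i $ j)"
proof -
  have "(\<lambda>M::real^'x^'x. M \<bullet> axis i (axis j 1)) = (\<lambda>M. M $ i $ j)"
    by (simp add: fun_eq_iff inner_axis)
  then show ?thesis using elin by metis
qed

lemma mpoly_fst: "mpoly (\<lambda>z::(real^'x::finite^'x) \<times> (real^'x). fst z)"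
  by (simp add: mpoly_def epoly_fst_entry)

lemma vpoly_snd: "vpoly (\<lambda>z::(real^'x::finite^'x) \<times> (real^'x). snd z)"
  by (simp add: vpoly_def epoly_snd_entry)

lemma mpoly_id: "mpoly (\<lambda>M::real^'x::finite^'x. M)"
  by (simp add: mpoly_def epoly_id_entry)

lemma mpoly_chart: "mpoly F \<Longrightarrow> mpoly (\<lambda>z. mat_chart x0 (F z))"
  unfolding mpoly_def mat_chart_def
proof (intro allI)
  fix i j assume F: "\<forall>i j. epoly (\<lambda>z. F z $ i $ j)"
  show "epoly (\<lambda>z. (\<chi> i j. if i = x0 then 1 - (\<Sum>i'\<in>UNIV - {x0}. F z $ i' $ j) else F z $ i $ j) $ i $ j)"
  proof (cases "i = x0")
    case True
    then show ?thesis using F by (simp add: epoly_minus econst epoly_sum)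
  next
    case False
    then show ?thesis using F by simp
  qed
qed

lemma vpoly_chart: "vpoly F \<Longrightarrow> vpoly (\<lambda>z. vec_chart x0 (F z))"
  unfolding vpoly_def vec_chart_def
proof (intro allI)
  fix i assume F: "\<forall>i. epoly (\<lambda>z. F z $ i)"
  show "epoly (\<lambda>z. (\<chi> i. if i = x0 then 1 - (\<Sum>i'\<in>UNIV - {x0}. F z $ i') else F z $ i) $ i)"
  proof (cases "i = x0")
    case True
    then show ?thesis using F by (simp add: epoly_minus econst epoly_sum)
  next
    case False
    then show ?thesis using F by simp
  qed
qed

lemma mpoly_Wy: "mpoly F \<Longrightarrow> mpoly (\<lambda>z. Wy (F z) V y)"
  unfolding Wy_def by (intro mpoly_mult mpoly_const)

lemma mpoly_fold: "mpoly F \<Longrightarrow> mpoly A0 \<Longrightarrow> mpoly (\<lambda>z. fold (\<lambda>y A. Wy (F z) V y ** A) ys (A0 z))"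
proof (induction ys arbitrary: A0)
  case Nil then show ?case by simp
next
  case (Cons y ys)
  have "mpoly (\<lambda>z. Wy (F z) V y ** A0 z)" using Cons by (intro mpoly_mult mpoly_Wy)
  then show ?case using Cons.IH[OF Cons.prems(1)] by simp
qed

lemma mpoly_actM: "mpoly F \<Longrightarrow> mpoly (\<lambda>z. actM (F z) V ys)"
  unfolding actM_def by (intro mpoly_fold mpoly_const)

lemma vpoly_obsrow: "mpoly F \<Longrightarrow> vpoly (\<lambda>z. obsrow (F z) V ys)"
  using mpoly_actM[of F V ys] unfolding vpoly_def mpoly_def obsrow_def
  by (auto intro!: epoly_sum)

lemma vpoly_act: "mpoly F \<Longrightarrow> vpoly P \<Longrightarrow> vpoly (\<lambda>z. act (F z) V ys (P z))"
  unfolding act_eq by (intro vpoly_mult mpoly_actM)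

lemma mpoly_Mmat: "mpoly F \<Longrightarrow> mpoly (\<lambda>z. Mmat x0 (F z))"
  unfolding mpoly_def Mmat_def
proof (intro allI)
  fix i j assume F: "\<forall>i j. epoly (\<lambda>z. F z $ i $ j)"
  show "epoly (\<lambda>z. (\<chi> i j. if i = x0 then 1 else (if i = j then 1 else 0) - F z $ i $ j) $ i $ j)"
    using F by (cases "i = x0") (simp_all add: econst epoly_minus)
qed

lemma vpoly_qvec: "mpoly F \<Longrightarrow> vpoly (\<lambda>z. qvec x0 (F z))"
  unfolding vpoly_def qvec_def
proof (intro allI)
  fix k assume F: "mpoly F"
  have "mpoly (\<lambda>z. (\<chi> i j. if j = k then axis x0 1 $ i else Mmat x0 (F z) $ i $ j) :: real^_^_)"
    using mpoly_Mmat[OF F, of x0] unfolding mpoly_def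
  proof (intro allI)
    fix i j assume A: "\<forall>i j. epoly (\<lambda>z. Mmat x0 (F z) $ i $ j)"
    show "epoly (\<lambda>z. (\<chi> i j. if j = k then axis x0 1 $ i else Mmat x0 (F z) $ i $ j) $ i $ j)"
      using A by (cases "j = k") (simp_all add: econst)
  qed
  then show "epoly (\<lambda>z. (\<chi> k. det (\<chi> i j. if j = k then axis x0 1 $ i else Mmat x0 (F z) $ i $ j)) $ k)"
    using epoly_det by simp
qed

lemma chart_id: "(\<And>j. (\<Sum>i\<in>UNIV. W $ i $ j) = 1) \<Longrightarrow> mat_chart x0 W = W"
proof -
  assume cs: "\<And>j. (\<Sum>i\<in>UNIV. W $ i $ j) = 1"
  have "1 - (\<Sum>i'\<in>UNIV - {x0}. W $ i' $ j) = W $ x0 $ j" for j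
    using cs[of j] by (simp add: sum.remove[of UNIV x0])
  then show ?thesis by (simp add: mat_chart_def vec_eq_iff)
qed

lemma vchart_id: "(\<Sum>i\<in>UNIV. p $ i) = 1 \<Longrightarrow> vec_chart x0 p = p"
proof -
  assume cs: "(\<Sum>i\<in>UNIV. p $ i) = 1"
  have "1 - (\<Sum>i'\<in>UNIV - {x0}. p $ i') = p $ x0"
    using cs by (simp add: sum.remove[of UNIV x0])
  then show ?thesis by (simp add: vec_chart_def vec_eq_iff)
qed

lemma act_scaled_gram:
  assumes "c \<noteq> 0" "\<forall>v. (\<forall>ys\<in>L. act W V ys u \<bullet> v = 0) \<longrightarrow> v = 0" "finite L"
  shows "det (gram L (\<lambda>ys. act W V ys (c *\<^sub>R u))) \<noteq> 0"
proof (rule gram_det_nz[OF assms(3)])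
  fix v assume "\<forall>ys\<in>L. act W V ys (c *\<^sub>R u) \<bullet> v = 0"
  then have "\<forall>ys\<in>L. act W V ys u \<bullet> v = 0" using assms(1) by (simp add: act_scale)
  then show "v = 0" using assms(2) by blast
qed

theorem lemma11:
  fixes V :: "'y::finite \<Rightarrow> 'x::finite \<Rightarrow> real" and x0 :: 'x
  assumes "transition_matrix V"
    and "\<exists>y. \<not> (\<exists>c. V y = (\<lambda>_. c))"
  shows "(AE MP in (lborel :: ((real^'x^'x) \<times> (real^'x)) measure).
            mat_chart x0 (fst MP) \<in> stochastic_matrices \<and> vec_chart x0 (snd MP) \<in> prob_simplex \<longrightarrow>
              Kspace (mat_chart x0 (fst MP)) V = {0} \<and>
              Vk (mat_chart x0 (fst MP)) V (vec_chart x0 (snd MP))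
                 (k_PWV (mat_chart x0 (fst MP)) V (vec_chart x0 (snd MP))) = UNIV)
       \<and> (AE M in (lborel :: (real^'x^'x) measure).
            mat_chart x0 M \<in> stochastic_matrices \<longrightarrow>
              Kspace (mat_chart x0 M) V = {0} \<and>
              Vk (mat_chart x0 M) V (stationary (mat_chart x0 M))
                 (k_PWV (mat_chart x0 M) V (stationary (mat_chart x0 M))) = UNIV)"
proof -
  obtain y0 where ny: "\<not> (\<exists>c. V y0 = (\<lambda>_. c))" using assms(2) by blast
  have "\<exists>a b. V y0 a \<noteq> V y0 b"
  proof (rule ccontr)
    assume "\<not> (\<exists>a b. V y0 a \<noteq> V y0 b)"
    then have "V y0 = (\<lambda>_. V y0 undefined)" by auto
    with ny show False by blast
  qed
  then obtain a b where ab: "V y0 a \<noteq> V y0 b" by blast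
  obtain d and \<rho> :: "'x \<Rightarrow> 'x" where cyc: "d > 0" "\<rho> ^^ d = id"
    "\<And>x x'. \<exists>k. (\<rho> ^^ k) x = x'"
    "\<And>x x'. x \<noteq> x' \<Longrightarrow> \<exists>k. V y0 ((\<rho> ^^ k) x) \<noteq> V y0 ((\<rho> ^^ k) x')"
    by (rule cycle_exists[OF ab], rule that, assumption+)
  have "surj \<rho>"
  proof -
    have "\<rho> ((\<rho> ^^ (d - 1)) x) = x" for x
    proof -
      have "\<rho> ((\<rho> ^^ (d - 1)) x) = (\<rho> ^^ Suc (d - 1)) x" by simp
      also have "Suc (d - 1) = d" using cyc(1) by simp
      finally show ?thesis using cyc(2) by simp
    qed
    then show ?thesis by (metis surjI)
  qed
  then have bij: "bij \<rho>" by (simp add: bij_def finite_UNIV_surj_inj)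
  obtain K1 where K1: "K1 \<ge> 1" "\<forall>v. (\<forall>ys\<in>{ys. length ys = K1}. obsrow (Wob \<rho>) V ys \<bullet> v = 0) \<longrightarrow> v = 0"
    using obs_witness[OF assms(1) cyc(2) cyc(1) cyc(4)] by blast
  obtain K2 where K2: "K2 \<ge> 1" "\<forall>v. (\<forall>ys\<in>{ys. length ys \<le> K2}. act (Wre \<rho>) V ys (\<chi> i. 1) \<bullet> v = 0) \<longrightarrow> v = 0"
    using reach_witness[OF assms(1) cyc(2) cyc(1) cyc(4)] by blast
  note SW = stat_witness[OF bij cyc(3), of x0]

  define h1 where "h1 M = det (gram {ys. length ys = K1} (obsrow (mat_chart x0 M) V))" for M :: "real^'x^'x"
  define h2 where "h2 z = det (gram {ys. length ys \<le> K2} (\<lambda>ys. act (mat_chart x0 (fst z)) V ys (vec_chart x0 (snd z))))"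
    for z :: "(real^'x^'x) \<times> (real^'x)"
  define h3 where "h3 M = det (Mmat x0 (mat_chart x0 M)) *
     det (gram {ys. length ys \<le> K2} (\<lambda>ys. act (mat_chart x0 M) V ys (qvec x0 (mat_chart x0 M))))" for M :: "real^'x^'x"

  have p1: "epoly h1"
    unfolding h1_def[abs_def]
    by (intro epoly_det mpoly_gram finite_len_eq vpoly_obsrow mpoly_chart mpoly_id)
  have p1': "epoly (\<lambda>z::(real^'x^'x) \<times> (real^'x). h1 (fst z))"
    unfolding h1_def
    by (intro epoly_det mpoly_gram finite_len_eq vpoly_obsrow mpoly_chart mpoly_fst)
  have p2: "epoly h2"
    unfolding h2_def[abs_def]
    by (intro epoly_det mpoly_gram finite_len_le vpoly_act mpoly_chart mpoly_fst vpoly_chart vpoly_snd)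
  have p3: "epoly h3"
    unfolding h3_def[abs_def]
    by (intro emult epoly_det mpoly_Mmat mpoly_gram finite_len_le vpoly_act mpoly_chart mpoly_id vpoly_qvec)

  have w1: "h1 (Wob \<rho>) \<noteq> 0"
    unfolding h1_def chart_id[OF Wob_colsum]
    by (rule gram_det_nz[OF finite_len_eq]) (use K1(2) in blast)
  have w1': "h1 (fst (Wob \<rho>, 0::real^'x)) \<noteq> 0" using w1 by simp
  let ?c = "1 / real CARD('x)"
  have sum_c: "(\<Sum>i\<in>UNIV. (?c *\<^sub>R (\<chi> i. (1::real)) :: real^'x) $ i) = 1" by simp
  have w2: "h2 (Wre \<rho>, ?c *\<^sub>R (\<chi> i. 1)) \<noteq> 0"
    unfolding h2_def fst_conv snd_conv chart_id[OF Wre_colsum[OF bij]] vchart_id[OF sum_c]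
    by (rule act_scaled_gram[OF _ K2(2) finite_len_le]) simp
  have w3: "h3 (Wre \<rho>) \<noteq> 0"
  proof -
    have "det (gram {ys. length ys \<le> K2} (\<lambda>ys. act (Wre \<rho>) V ys (qvec x0 (Wre \<rho>)))) \<noteq> 0"
      unfolding SW(2)
      by (rule act_scaled_gram[OF _ K2(2) finite_len_le]) (use SW(1) in simp)
    then show ?thesis unfolding h3_def chart_id[OF Wre_colsum[OF bij]] using SW(1) by simp
  qed

  have AE1: "AE z in (lborel :: ((real^'x^'x) \<times> (real^'x)) measure). h1 (fst z) \<noteq> 0"
    by (rule AE_I'[OF epoly_null[OF p1' w1']]) auto
  have AE2: "AE z in (lborel :: ((real^'x^'x) \<times> (real^'x)) measure). h2 z \<noteq> 0"
    by (rule AE_I'[OF epoly_null[OF p2 w2]]) auto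
  have AE3: "AE M in (lborel :: (real^'x^'x) measure). h1 M \<noteq> 0"
    by (rule AE_I'[OF epoly_null[OF p1 w1]]) auto
  have AE4: "AE M in (lborel :: (real^'x^'x) measure). h3 M \<noteq> 0"
    by (rule AE_I'[OF epoly_null[OF p3 w3]]) auto

  have KS: "Kspace (mat_chart x0 M) V = {0}" if "h1 M \<noteq> 0" for M
    using Kspace_zero[OF kerP_zero K1(1)] that unfolding h1_def by blast

  show ?thesis
  proof
    show "AE MP in (lborel :: ((real^'x^'x) \<times> (real^'x)) measure).
            mat_chart x0 (fst MP) \<in> stochastic_matrices \<and> vec_chart x0 (snd MP) \<in> prob_simplex \<longrightarrow>
              Kspace (mat_chart x0 (fst MP)) V = {0} \<and>
              Vk (mat_chart x0 (fst MP)) V (vec_chart x0 (snd MP))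
                 (k_PWV (mat_chart x0 (fst MP)) V (vec_chart x0 (snd MP))) = UNIV"
      using AE1 AE2
    proof eventually_elim
      case (elim z)
      have "span {act (mat_chart x0 (fst z)) V ys (vec_chart x0 (snd z)) | ys. length ys \<le> K2} = UNIV"
        using elim(2) unfolding h2_def by (rule reach_gram)
      then show ?case using KS[OF elim(1)] Vk_full K2(1) by blast
    qed
    show "AE M in (lborel :: (real^'x^'x) measure).
            mat_chart x0 M \<in> stochastic_matrices \<longrightarrow>
              Kspace (mat_chart x0 M) V = {0} \<and>
              Vk (mat_chart x0 M) V (stationary (mat_chart x0 M))
                 (k_PWV (mat_chart x0 M) V (stationary (mat_chart x0 M))) = UNIV"
      using AE3 AE4
    proof eventually_elim
      case (elim M)
      show ?case
      proof
        assume st: "mat_chart x0 M \<in> stochastic_matrices"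
        let ?W = "mat_chart x0 M"
        let ?D = "det (Mmat x0 ?W)"
        have D: "?D \<noteq> 0" using elim(2) unfolding h3_def by auto
        have G: "det (gram {ys. length ys \<le> K2} (\<lambda>ys. act ?W V ys (qvec x0 ?W))) \<noteq> 0"
          using elim(2) unfolding h3_def by auto
        have P: "stationary ?W = (1 / ?D) *\<^sub>R qvec x0 ?W"
          using stationary_eq[OF _ D] st by (simp add: stochastic_matrices_def)
        have q: "qvec x0 ?W = ?D *\<^sub>R stationary ?W" using P D by simp
        have fq: "span {act ?W V ys (qvec x0 ?W) | ys. length ys \<le> K2} = UNIV"
          using G by (rule reach_gram)
        have sub: "{act ?W V ys (qvec x0 ?W) | ys. length ys \<le> K2} \<subseteq>
            span {act ?W V ys (stationary ?W) | ys. length ys \<le> K2}"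
        proof
          fix r assume "r \<in> {act ?W V ys (qvec x0 ?W) | ys. length ys \<le> K2}"
          then obtain ys where ys: "r = act ?W V ys (qvec x0 ?W)" "length ys \<le> K2" by blast
          then have "r = ?D *\<^sub>R act ?W V ys (stationary ?W)" by (simp add: q act_scale)
          moreover have "act ?W V ys (stationary ?W) \<in> span {act ?W V ys (stationary ?W) | ys. length ys \<le> K2}"
            using ys(2) by (intro span_base) blast
          ultimately show "r \<in> span {act ?W V ys (stationary ?W) | ys. length ys \<le> K2}"
            by (simp add: span_scale)
        qed
        have "span {act ?W V ys (qvec x0 ?W) | ys. length ys \<le> K2} \<subseteq> span {act ?W V ys (stationary ?W) | ys. length ys \<le> K2}"
          by (rule span_minimal[OF sub subspace_span])
        then have "span {act ?W V ys (stationary ?W) | ys. length ys \<le> K2} = UNIV"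
          using fq by auto
        then show "Kspace ?W V = {0} \<and> Vk ?W V (stationary ?W) (k_PWV ?W V (stationary ?W)) = UNIV"
          using KS[OF elim(1)] Vk_full K2(1) by blast
      qed
    qed
  qed
qed


end
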